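(* If $X$ is a discrete metric space with bounded geometry and finite APC-decomposition complexity, then $X$ has property A.
   Context: A discrete metric space $X$ has bounded geometry if for every $r>0$ there is $N_r$ with $|B(x,r)|<N_r$ for all $x\in X$. Such an $X$ has property A if for each $R,\varepsilon>0$ there is a map $\xi\colon X\to\ell^1(X)$ with $\|\xi_x\|_1=1$ for all $x$, $\|\xi_{x_1}-\xi_{x_2}\|_1\le\varepsilon$ whenever $d(x_1,x_2)\le R$, and some $S>0$ with $\operatorname{supp}\xi_x\subset\bar B(x,S)$ for all $x$. A family $\mathcal{U}$ of metric subspaces of $(X,d)$ is $r$-disjoint if $d(x,y)>r$ whenever $x\in U$, $y\in U'$, $U\neq U'$ in $\mathcal{U}$. For families $\mathcal{X},\mathcal{Y}$ and $R\in\mathbb{R}^{\mathbb{N}}$, $\mathcal{X}\xrightarrow{R}\mathcal{Y}$ means: there is an integer $k$ such that for each $X\in\mathcal{X}$ there are subcollections $\mathcal{U}_1,\dots,\mathcal{U}_k\subseteq\mathcal{Y}$ of subspaces of $X$, each $\mathcal{U}_i$ being $R_i$-disjoint, with $\bigcup_i\mathcal{U}_i$ covering $X$. A family is bounded if the diameters of its members are uniformly bounded. $\mathfrak{C}_0$ is the class of bounded families; for an ordinal $\alpha>0$, $\mathfrak{C}_\alpha$ is the class of families $\mathcal{X}$ such that for every $R\in\mathbb{R}^{\mathbb{N}}$ there exist $\beta<\alpha$ and $\mathcal{Y}\in\mathfrak{C}_\beta$ with $\mathcal{X}\xrightarrow{R}\mathcal{Y}$. A metric space has finite APC-decomposition complexity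 if it is a member of some family belonging to $\mathfrak{C}_\alpha$ for some ordinal $\alpha$. *)

theory Defs
  imports "HOL-Analysis.Analysis"
begin

text \<open>Metric
  subspaces are subsets with the restricted distance d.\<close>

definition discrete_space :: "'a set \<Rightarrow> ('a \<Rightarrow> 'a \<Rightarrow> real) \<Rightarrow> bool" where
  "discrete_space X d \<longleftrightarrow> (\<forall>x\<in>X. \<exists>e>0. \<forall>y\<in>X. d x y < e \<longrightarrow> y = x)"

definition open_ball :: "'a set \<Rightarrow> ('a \<Rightarrow> 'a \<Rightarrow> real) \<Rightarrow> 'a \<Rightarrow> real \<Rightarrow> 'a set" where
  "open_ball X d x r = {y\<in>X. d x y < r}"

definition bounded_geometry :: "'a set \<Rightarrow> ('a \<Rightarrow> 'a \<Rightarrow> real) \<Rightarrow> bool" where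
  "bounded_geometry X d \<longleftrightarrow>
     (\<forall>r>0. \<exists>N::nat. \<forall>x\<in>X. finite (open_ball X d x r) \<and> card (open_ball X d x r) < N)"

text \<open>Property A, with \<open>\<xi> x\<close> an element of \<open>\<ell>\<^sup>1(X)\<close> (real valued functions on X,
  norm given by the (possibly infinite) sum of absolute values over X).\<close>
definition property_A :: "'a set \<Rightarrow> ('a \<Rightarrow> 'a \<Rightarrow> real) \<Rightarrow> bool" where
  "property_A X d \<longleftrightarrow>
     (\<forall>R>0. \<forall>\<epsilon>>0. \<exists>\<xi> :: 'a \<Rightarrow> 'a \<Rightarrow> real.
        (\<forall>x\<in>X. (\<lambda>y. \<bar>\<xi> x y\<bar>) summable_on X \<and> infsum (\<lambda>y. \<bar>\<xi> x y\<bar>) X = 1) \<and>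
        (\<forall>x1\<in>X. \<forall>x2\<in>X. d x1 x2 \<le> R \<longrightarrow>
            infsum (\<lambda>y. \<bar>\<xi> x1 y - \<xi> x2 y\<bar>) X \<le> \<epsilon>) \<and>
        (\<exists>S>0. \<forall>x\<in>X. \<forall>y\<in>X. \<xi> x y \<noteq> 0 \<longrightarrow> d x y \<le> S))"

definition r_disjoint :: "('a \<Rightarrow> 'a \<Rightarrow> real) \<Rightarrow> real \<Rightarrow> 'a set set \<Rightarrow> bool" where
  "r_disjoint d r \<U> \<longleftrightarrow>
     (\<forall>U\<in>\<U>. \<forall>U'\<in>\<U>. U \<noteq> U' \<longrightarrow> (\<forall>x\<in>U. \<forall>y\<in>U'. d x y > r))"

definition bounded_family :: "('a \<Rightarrow> 'a \<Rightarrow> real) \<Rightarrow> 'a set set \<Rightarrow> bool" where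
  "bounded_family d \<X> \<longleftrightarrow> (\<exists>D. \<forall>U\<in>\<X>. \<forall>x\<in>U. \<forall>y\<in>U. d x y \<le> D)"

definition decomposes :: "('a \<Rightarrow> 'a \<Rightarrow> real) \<Rightarrow> 'a set set \<Rightarrow> (nat \<Rightarrow> real) \<Rightarrow> 'a set set \<Rightarrow> bool" where
  "decomposes d \<X> R \<Y> \<longleftrightarrow>
     (\<exists>k::nat. \<forall>X\<in>\<X>. \<exists>\<U> :: nat \<Rightarrow> 'a set set.
        (\<forall>i\<in>{1..k}. \<U> i \<subseteq> \<Y> \<and> (\<forall>V\<in>\<U> i. V \<subseteq> X) \<and> r_disjoint d (R i) (\<U> i)) \<and>
        X \<subseteq> \<Union>(\<Union>i\<in>{1..k}. \<U> i))"

text \<open>The union over all ordinals \<alpha> of the classes \<open>\<frak>C\<^sub>\<alpha>\<close> (restricted to families of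
  subspaces of one ambient space), as the least class closed under the two
  formation rules.\<close>
inductive finite_apc :: "('a \<Rightarrow> 'a \<Rightarrow> real) \<Rightarrow> 'a set set \<Rightarrow> bool" for d where
  base: "bounded_family d \<X> \<Longrightarrow> finite_apc d \<X>"
| step: "(\<forall>R. \<exists>\<Y>. finite_apc d \<Y> \<and> decomposes d \<X> R \<Y>) \<Longrightarrow> finite_apc d \<X>"

definition finite_APC_complexity :: "'a set \<Rightarrow> ('a \<Rightarrow> 'a \<Rightarrow> real) \<Rightarrow> bool" where
  "finite_APC_complexity X d \<longleftrightarrow> (\<exists>\<X>. X \<in> \<X> \<and> finite_apc d \<X>)"

end

theory Submission
  imports Defs
begin

locale bgm = Metric_space X d for X :: "'a set" and d +
  assumes bg: "bounded_geometry X d"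
begin

definition cb :: "'a \<Rightarrow> real \<Rightarrow> 'a set" where
  "cb x S = {y\<in>X. d x y \<le> S}"

lemma finite_cb: assumes "x \<in> X" shows "finite (cb x S)"
proof -
  have "\<exists>N::nat. \<forall>x\<in>X. finite (open_ball X d x (\<bar>S\<bar>+1)) \<and> card (open_ball X d x (\<bar>S\<bar>+1)) < N"
  proof -
    have "\<bar>S\<bar>+1 > 0" by simp
    then show ?thesis using bg unfolding bounded_geometry_def by blast
  qed
  then have N: "finite (open_ball X d x (\<bar>S\<bar>+1))" using assms by blast
  have "cb x S \<subseteq> open_ball X d x (\<bar>S\<bar>+1)"
    unfolding cb_def open_ball_def by auto
  then show ?thesis using N finite_subset by blast
qed

lemma inf_to_sum:
  fixes f :: "'a \<Rightarrow> real"
  assumes "finite A" "A \<subseteq> X" "\<And>y. y \<in> X \<Longrightarrow> f y \<noteq> 0 \<Longrightarrow> y \<in> A"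
  shows "infsum f X = sum f A"
proof -
  have "infsum f X = infsum f A"
    by (rule infsum_cong_neutral) (use assms in auto)
  then show ?thesis using assms by simp
qed

lemma summ_fin:
  fixes f :: "'a \<Rightarrow> real"
  assumes "finite A" "A \<subseteq> X" "\<And>y. y \<in> X \<Longrightarrow> f y \<noteq> 0 \<Longrightarrow> y \<in> A"
  shows "f summable_on X"
proof -
  have "f summable_on X \<longleftrightarrow> f summable_on A"
    by (rule summable_on_cong_neutral) (use assms in auto)
  then show ?thesis using assms by simp
qed

definition goodA :: "'a set \<Rightarrow> real \<Rightarrow> real \<Rightarrow> real \<Rightarrow> ('a \<Rightarrow> 'a \<Rightarrow> real) \<Rightarrow> bool" where
  "goodA V R e S \<xi> \<longleftrightarrow> (\<forall>x\<in>V. (\<forall>y. 0 \<le> \<xi> x y) \<and> (\<forall>y. \<xi> x y \<noteq> 0 \<longrightarrow> y \<in> X \<and> d x y \<le> S)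
     \<and> infsum (\<xi> x) X = 1
     \<and> (\<forall>x'\<in>V. d x x' \<le> R \<longrightarrow> infsum (\<lambda>y. \<bar>\<xi> x y - \<xi> x' y\<bar>) X \<le> e))"

definition unifA :: "'a set set \<Rightarrow> bool" where
  "unifA F \<longleftrightarrow> (\<forall>R>0. \<forall>e>0. \<exists>S. \<forall>V\<in>F. V \<subseteq> X \<longrightarrow> (\<exists>\<xi>. goodA V R e S \<xi>))"

lemma base_case:
  assumes "bounded_family d F" shows "unifA F"
  unfolding unifA_def
proof (intro allI impI)
  fix R e :: real assume "R > 0" "e > 0"
  obtain D where D: "\<forall>U\<in>F. \<forall>x\<in>U. \<forall>y\<in>U. d x y \<le> D"
    using assms unfolding bounded_family_def by blast
  show "\<exists>S. \<forall>V\<in>F. V \<subseteq> X \<longrightarrow> (\<exists>\<xi>. goodA V R e S \<xi>)"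
  proof (rule exI[of _ "\<bar>D\<bar>"], intro ballI impI)
    fix V assume V: "V \<in> F" "V \<subseteq> X"
    define \<xi> where "\<xi> = (\<lambda>(x::'a) y. if y \<in> V then 1 / real (card V) else 0)"
    have "goodA V R e \<bar>D\<bar> \<xi>"
      unfolding goodA_def
    proof (intro ballI conjI allI impI)
      fix x assume x: "x \<in> V"
      have Vsub: "V \<subseteq> cb x D" using D V x unfolding cb_def by auto
      have xX: "x \<in> X" using V x by blast
      have fin: "finite V" using finite_subset[OF Vsub finite_cb[OF xX]] .
      have cne: "card V > 0" using fin x card_gt_0_iff by blast
      show "\<And>y. 0 \<le> \<xi> x y" unfolding \<xi>_def by auto
      show "\<And>y. \<xi> x y \<noteq> 0 \<Longrightarrow> y \<in> X" unfolding \<xi>_def using V by (auto split: if_splits)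
      show "\<And>y. \<xi> x y \<noteq> 0 \<Longrightarrow> d x y \<le> \<bar>D\<bar>" unfolding \<xi>_def using D V x
        by (fastforce split: if_splits)
      have "infsum (\<xi> x) X = sum (\<xi> x) V"
        by (rule inf_to_sum) (use fin V in \<open>auto simp: \<xi>_def split: if_splits\<close>)
      also have "\<dots> = 1" unfolding \<xi>_def using cne by simp
      finally show "infsum (\<xi> x) X = 1" .
      fix x' assume "x' \<in> V" "d x x' \<le> R"
      have "infsum (\<lambda>y. \<bar>\<xi> x y - \<xi> x' y\<bar>) X = 0" unfolding \<xi>_def by simp
      then show "infsum (\<lambda>y. \<bar>\<xi> x y - \<xi> x' y\<bar>) X \<le> e" using \<open>e > 0\<close> by simp
    qed
    then show "\<exists>\<xi>. goodA V R e \<bar>D\<bar> \<xi>" by blast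
  qed
qed

lemma final_case:
  assumes "unifA F" "X \<in> F" shows "property_A X d"
  unfolding property_A_def
proof (intro allI impI)
  fix R e :: real assume Re: "R > 0" "e > 0"
  obtain S \<xi> where g: "goodA X R e S \<xi>" using assms Re unfolding unifA_def by blast
  show "\<exists>\<xi>. (\<forall>x\<in>X. (\<lambda>y. \<bar>\<xi> x y\<bar>) summable_on X \<and> infsum (\<lambda>y. \<bar>\<xi> x y\<bar>) X = 1) \<and>
        (\<forall>x1\<in>X. \<forall>x2\<in>X. d x1 x2 \<le> R \<longrightarrow> infsum (\<lambda>y. \<bar>\<xi> x1 y - \<xi> x2 y\<bar>) X \<le> e) \<and>
        (\<exists>S>0. \<forall>x\<in>X. \<forall>y\<in>X. \<xi> x y \<noteq> 0 \<longrightarrow> d x y \<le> S)"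
  proof (rule exI[of _ \<xi>], intro conjI ballI impI)
    fix x assume x: "x \<in> X"
    have nn: "\<And>y. 0 \<le> \<xi> x y" and sp: "\<And>y. \<xi> x y \<noteq> 0 \<Longrightarrow> y \<in> X \<and> d x y \<le> S"
      and one: "infsum (\<xi> x) X = 1" using g x unfolding goodA_def by auto
    show "(\<lambda>y. \<bar>\<xi> x y\<bar>) summable_on X"
      by (rule summ_fin[of "cb x S"]) (use finite_cb x sp in \<open>auto simp: cb_def\<close>)
    show "infsum (\<lambda>y. \<bar>\<xi> x y\<bar>) X = 1" using one nn by simp
  next
    fix x1 x2 assume "x1 \<in> X" "x2 \<in> X" "d x1 x2 \<le> R"
    then show "infsum (\<lambda>y. \<bar>\<xi> x1 y - \<xi> x2 y\<bar>) X \<le> e" using g unfolding goodA_def by auto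
  next
    show "\<exists>S>0. \<forall>x\<in>X. \<forall>y\<in>X. \<xi> x y \<noteq> 0 \<longrightarrow> d x y \<le> S"
    proof (intro exI[of _ "\<bar>S\<bar>+1"] conjI ballI impI)
      fix x y assume "x \<in> X" "y \<in> X" "\<xi> x y \<noteq> 0"
      then have "d x y \<le> S" using g unfolding goodA_def by blast
      then show "d x y \<le> \<bar>S\<bar>+1" by simp
    qed simp
  qed
qed

lemma goodA_mono: "goodA V R e S \<xi> \<Longrightarrow> e \<le> e' \<Longrightarrow> goodA V R e' S \<xi>"
  unfolding goodA_def by force

end

lemma geo_sum: "(\<Sum>i\<in>{1..k}. (1/2::real)^i) = 1 - (1/2)^k"
  by (induction k) (auto simp: sum.atLeast1_atMost_eq)

lemma norm_wt:
  fixes w v :: "nat \<Rightarrow> real"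
  assumes "finite I" "\<forall>i\<in>I. 0 \<le> v i" "sum w I \<ge> 1" "sum v I \<ge> 1"
  shows "(\<Sum>i\<in>I. \<bar>w i / sum w I - v i / sum v I\<bar>) \<le> 2 * (\<Sum>i\<in>I. \<bar>w i - v i\<bar>)"
proof -
  define W where "W = sum w I"
  define V where "V = sum v I"
  have W1: "W \<ge> 1" and V1: "V \<ge> 1" using assms W_def V_def by auto
  have pt: "\<bar>w i / W - v i / V\<bar> \<le> \<bar>w i - v i\<bar> / W + (v i / V) * (\<bar>V - W\<bar> / W)" if "i \<in> I" for i
  proof -
    have "w i / W - v i / V = (w i - v i) / W + (v i / V) * ((V - W) / W)"
      using W1 V1 by (simp add: field_simps)
    also have "\<bar>\<dots>\<bar> \<le> \<bar>(w i - v i) / W\<bar> + \<bar>(v i / V) * ((V - W) / W)\<bar>"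
      by (rule abs_triangle_ineq)
    also have "\<dots> = \<bar>w i - v i\<bar> / W + (v i / V) * (\<bar>V - W\<bar> / W)"
      using W1 V1 assms(2) that by (simp add: abs_mult)
    finally show ?thesis .
  qed
  have "(\<Sum>i\<in>I. \<bar>w i / W - v i / V\<bar>) \<le> (\<Sum>i\<in>I. \<bar>w i - v i\<bar> / W + (v i / V) * (\<bar>V - W\<bar> / W))"
    using pt by (rule sum_mono)
  also have "\<dots> = (\<Sum>i\<in>I. \<bar>w i - v i\<bar>) / W + (sum v I / V) * (\<bar>V - W\<bar> / W)"
    by (simp add: sum.distrib sum_divide_distrib sum_distrib_right)
  also have "\<dots> = (\<Sum>i\<in>I. \<bar>w i - v i\<bar>) / W + \<bar>V - W\<bar> / W"
    using V1 V_def by simp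
  also have "\<bar>V - W\<bar> \<le> (\<Sum>i\<in>I. \<bar>w i - v i\<bar>)"
  proof -
    have "V - W = (\<Sum>i\<in>I. v i - w i)" unfolding V_def W_def by (simp add: sum_subtractf)
    then have "\<bar>V - W\<bar> \<le> (\<Sum>i\<in>I. \<bar>v i - w i\<bar>)" by (simp add: sum_abs)
    then show ?thesis by (simp add: abs_minus_commute)
  qed
  then have "(\<Sum>i\<in>I. \<bar>w i - v i\<bar>) / W + \<bar>V - W\<bar> / W \<le> 2 * (\<Sum>i\<in>I. \<bar>w i - v i\<bar>) / W"
    using W1 by (simp add: divide_right_mono add_divide_distrib[symmetric])
  also have "\<dots> \<le> 2 * (\<Sum>i\<in>I. \<bar>w i - v i\<bar>)"
  proof -
    have s0: "0 \<le> (\<Sum>i\<in>I. \<bar>w i - v i\<bar>)" by (simp add: sum_nonneg)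
    have "2 * (\<Sum>i\<in>I. \<bar>w i - v i\<bar>) / W \<le> 2 * (\<Sum>i\<in>I. \<bar>w i - v i\<bar>) / 1"
      by (rule divide_left_mono) (use W1 s0 in auto)
    then show ?thesis by simp
  qed
  finally show ?thesis unfolding W_def V_def by simp
qed

locale comb = bgm X d for X :: "'a set" and d +
  fixes R :: real and M :: nat and Z :: "'a set" and e :: real and k :: nat
    and U :: "nat \<Rightarrow> 'a set set" and \<Xi> :: "'a set \<Rightarrow> 'a \<Rightarrow> 'a \<Rightarrow> real" and S' :: real
  assumes Rpos: "R > 0" and M1: "M \<ge> 1" and ZX: "Z \<subseteq> X" and e0: "e \<ge> 0"
    and cover: "Z \<subseteq> \<Union>(\<Union>i\<in>{1..k}. U i)"
    and sub: "\<forall>i\<in>{1..k}. \<forall>W\<in>U i. W \<subseteq> Z"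
    and disj: "\<forall>i\<in>{1..k}. r_disjoint d ((2 * (2^i * real M) + 1) * R) (U i)"
    and good: "\<forall>i\<in>{1..k}. \<forall>W\<in>U i. goodA W ((2 * (2^k * real M) + 1) * R) e S' (\<Xi> W)"
begin

definition mr :: "nat \<Rightarrow> real" where "mr i = 2^i * real M"
definition near where "near i x W \<longleftrightarrow> W \<in> U i \<and> (\<exists>v\<in>W. d x v < mr i * R)"
definition hasn where "hasn i x \<longleftrightarrow> (\<exists>W. near i x W)"
definition CS where "CS W i x = {j\<in>{1..2^i*M}. \<exists>v\<in>W. d x v < real j * R}"
definition g where "g W i x = real (card (CS W i x)) / mr i"
definition Ws where "Ws i x = (SOME W. near i x W)"
definition p where "p i x = (SOME q. q \<in> Ws i x \<and> d x q < mr i * R)"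
definition w where "w i x = (if hasn i x then g (Ws i x) i x else 0)"
definition \<eta> where "\<eta> i x = (if hasn i x then \<Xi> (Ws i x) (p i x) else (\<lambda>_. 0))"
definition Wt where "Wt x = (\<Sum>i\<in>{1..k}. w i x)"
definition \<zeta> where "\<zeta> x z = (\<Sum>i\<in>{1..k}. (w i x / Wt x) * \<eta> i x z)"

lemma mr_pos: "mr i > 0" unfolding mr_def using M1 by simp

lemma mr_mono: "i \<le> k \<Longrightarrow> mr i \<le> mr k"
  unfolding mr_def using M1 by (simp add: power_increasing)

lemma mr_nat: "real (2^i*M) = mr i" unfolding mr_def by simp

lemma unique:
  assumes i: "i \<in> {1..k}" and xy: "x \<in> X" "y \<in> X" "d x y \<le> R"
    and n: "near i x W" "near i y W'"
  shows "W = W'"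
proof (rule ccontr)
  assume ne: "W \<noteq> W'"
  obtain v v' where v: "v \<in> W" "d x v < mr i * R" and v': "v' \<in> W'" "d y v' < mr i * R"
    and WU: "W \<in> U i" "W' \<in> U i" using n unfolding near_def by blast
  have vX: "v \<in> X" "v' \<in> X" using sub i WU v v' ZX by blast+
  have "d v v' \<le> d v x + d x v'" by (rule triangle[OF vX(1) xy(1) vX(2)])
  also have "d x v' \<le> d x y + d y v'" by (rule triangle[OF xy(1) xy(2) vX(2)])
  finally have "d v v' < (2 * mr i + 1) * R" using v v' xy commute[of v x] by (simp add: algebra_simps)
  moreover have "d v v' > (2 * (2^i * real M) + 1) * R"
    using disj i WU ne v v' unfolding r_disjoint_def by blast
  ultimately show False unfolding mr_def by simp
qed

lemma Ws_p:
  assumes "hasn i x"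
  shows "near i x (Ws i x)" "Ws i x \<in> U i" "p i x \<in> Ws i x" "d x (p i x) < mr i * R"
proof -
  show n: "near i x (Ws i x)" using assms unfolding hasn_def Ws_def by (metis someI_ex)
  then show "Ws i x \<in> U i" unfolding near_def by blast
  have "\<exists>q. q \<in> Ws i x \<and> d x q < mr i * R" using n unfolding near_def by blast
  then have "p i x \<in> Ws i x \<and> d x (p i x) < mr i * R" unfolding p_def by (rule someI_ex)
  then show "p i x \<in> Ws i x" "d x (p i x) < mr i * R" by auto
qed

lemma CS_sub: "CS W i x \<subseteq> {1..2^i*M}" unfolding CS_def by auto

lemma g_bounds: "0 \<le> g W i x" "g W i x \<le> 1"
proof -
  show "0 \<le> g W i x" unfolding g_def using mr_pos[of i] by (intro divide_nonneg_pos) auto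
  have "card (CS W i x) \<le> 2^i*M" using card_mono[OF _ CS_sub] by fastforce
  then have "real (card (CS W i x)) \<le> mr i" using mr_nat[of i] by (metis of_nat_le_iff)
  then show "g W i x \<le> 1" unfolding g_def using mr_pos by simp
qed

lemma g_one: assumes "x \<in> W" "x \<in> X" shows "g W i x = 1"
proof -
  have "CS W i x = {1..2^i*M}"
    unfolding CS_def using assms Rpos by (auto intro!: bexI[of _ x])
  then show ?thesis unfolding g_def using mr_nat[of i] mr_pos[of i] by simp
qed

lemma g_zero: assumes "\<not> (\<exists>v\<in>W. d x v < mr i * R)" shows "g W i x = 0"
proof -
  have "CS W i x = {}"
  proof (rule ccontr)
    assume "CS W i x \<noteq> {}"
    then obtain j v where j: "j \<in> {1..2^i*M}" "v \<in> W" "d x v < real j * R"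
      unfolding CS_def by blast
    have "real j \<le> mr i" using j(1) mr_nat[of i] by (metis atLeastAtMost_iff of_nat_le_iff)
    then have "real j * R \<le> mr i * R" using Rpos by simp
    then show False using assms j by force
  qed
  then show ?thesis unfolding g_def by simp
qed

lemma cnt_le:
  assumes "x \<in> X" "y \<in> X" "d x y \<le> R" "W \<subseteq> X"
  shows "card (CS W i x) \<le> card (CS W i y) + 1"
proof -
  define n where "n = 2^i*M"
  have fin: "finite (CS W i x)" "finite (CS W i y)" by (rule finite_subset[OF CS_sub], simp)+
  have "Suc ` (CS W i x - {n}) \<subseteq> CS W i y"
  proof
    fix j' assume "j' \<in> Suc ` (CS W i x - {n})"
    then obtain j where j: "j' = Suc j" "j \<in> CS W i x" "j \<noteq> n" by blast
    then obtain v where v: "v \<in> W" "d x v < real j * R" "j \<in> {1..n}"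
      unfolding CS_def n_def by blast
    have vX: "v \<in> X" using assms(4) v(1) by blast
    have "d y v \<le> d y x + d x v" by (rule triangle[OF assms(2) assms(1) vX])
    also have "\<dots> < R + real j * R" using v assms commute[of y x] by simp
    finally have "d y v < real (Suc j) * R" by (simp add: algebra_simps)
    moreover have "Suc j \<in> {1..n}" using v j by auto
    ultimately show "j' \<in> CS W i y" unfolding CS_def n_def using v j by blast
  qed
  then have "card (Suc ` (CS W i x - {n})) \<le> card (CS W i y)" using card_mono fin by blast
  moreover have "card (Suc ` (CS W i x - {n})) = card (CS W i x - {n})"
    by (rule card_image) simp
  moreover have "card (CS W i x) \<le> card (CS W i x - {n}) + 1"
  proof (cases "n \<in> CS W i x")
    case True
    then have "card (CS W i x) > 0" using fin card_gt_0_iff by blast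
    then show ?thesis using True fin by (simp add: card_Diff_singleton_if)
  qed simp
  ultimately show ?thesis by linarith
qed

lemma g_var:
  assumes "x \<in> X" "y \<in> X" "d x y \<le> R" "W \<subseteq> X"
  shows "\<bar>g W i x - g W i y\<bar> \<le> 1 / mr i"
proof -
  have a: "real (card (CS W i x)) \<le> real (card (CS W i y)) + 1" using cnt_le[OF assms, of i]
    by (metis of_nat_1 of_nat_add of_nat_le_iff)
  have "card (CS W i y) \<le> card (CS W i x) + 1"
    using cnt_le[of y x W i] assms commute[of x y] by simp
  then have b: "real (card (CS W i y)) \<le> real (card (CS W i x)) + 1"
    by (metis of_nat_1 of_nat_add of_nat_le_iff)
  have "\<bar>g W i x - g W i y\<bar> = \<bar>real (card (CS W i x)) - real (card (CS W i y))\<bar> / mr i"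
    unfolding g_def using mr_pos[of i] by (simp add: diff_divide_distrib[symmetric])
  also have "\<dots> \<le> 1 / mr i" using a b mr_pos[of i] by (intro divide_right_mono) auto
  finally show ?thesis .
qed

lemma w_bounds: "0 \<le> w i x" "w i x \<le> 1"
  unfolding w_def using g_bounds by auto

lemma w_zero: "\<not> hasn i x \<Longrightarrow> w i x = 0" unfolding w_def by simp

lemma Wt_ge1: assumes "x \<in> Z" shows "Wt x \<ge> 1"
proof -
  obtain i W where i: "i \<in> {1..k}" "W \<in> U i" "x \<in> W" using cover assms by blast
  have xX: "x \<in> X" using assms ZX by blast
  have n: "near i x W" unfolding near_def using i xX Rpos mr_pos[of i] by force
  then have h: "hasn i x" unfolding hasn_def by blast
  have "d x x \<le> R" using xX Rpos by simp
  then have "Ws i x = W" using unique[OF i(1) xX xX _ Ws_p(1)[OF h] n] by simp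
  then have "w i x = 1" unfolding w_def using h g_one i xX by simp
  moreover have "w i x \<le> Wt x" unfolding Wt_def
    using i(1) w_bounds by (intro member_le_sum) auto
  ultimately show ?thesis by simp
qed

lemma w_var:
  assumes i: "i \<in> {1..k}" and xy: "x \<in> Z" "y \<in> Z" "d x y \<le> R"
  shows "\<bar>w i x - w i y\<bar> \<le> 1 / mr i"
proof -
  have X: "x \<in> X" "y \<in> X" using xy ZX by auto
  have WX: "hasn i z \<Longrightarrow> Ws i z \<subseteq> X" for z using Ws_p(2)[of i z] sub i ZX by blast
  show ?thesis
  proof (cases "hasn i x"; cases "hasn i y")
    assume hx: "hasn i x" and hy: "hasn i y"
    have "Ws i x = Ws i y" using unique[OF i X xy(3) Ws_p(1)[OF hx] Ws_p(1)[OF hy]] .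
    then show ?thesis unfolding w_def using hx hy g_var[OF X xy(3) WX[OF hy], of i] by simp
  next
    assume hx: "hasn i x" and hy: "\<not> hasn i y"
    have "\<not> (\<exists>v\<in>Ws i x. d y v < mr i * R)"
      using hy Ws_p(2)[OF hx] unfolding hasn_def near_def by blast
    then have "g (Ws i x) i y = 0" by (rule g_zero)
    then show ?thesis unfolding w_def using hx hy g_var[OF X xy(3) WX[OF hx], of i] by simp
  next
    assume hx: "\<not> hasn i x" and hy: "hasn i y"
    have "\<not> (\<exists>v\<in>Ws i y. d x v < mr i * R)"
      using hx Ws_p(2)[OF hy] unfolding hasn_def near_def by blast
    then have "g (Ws i y) i x = 0" by (rule g_zero)
    then show ?thesis unfolding w_def using hx hy g_var[OF X xy(3) WX[OF hy], of i] by simp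
  next
    assume "\<not> hasn i x" "\<not> hasn i y"
    then show ?thesis unfolding w_def using mr_pos[of i] by simp
  qed
qed


definition Rb where "Rb = (2 * (2^k * real M) + 1) * R"
definition T where "T = mr k * R + S'"

lemma eta_props:
  assumes i: "i \<in> {1..k}" and x: "x \<in> Z"
  shows "0 \<le> \<eta> i x z" "\<eta> i x z \<noteq> 0 \<Longrightarrow> z \<in> X \<and> d x z \<le> T"
    "hasn i x \<Longrightarrow> infsum (\<eta> i x) X = 1"
proof -
  have xX: "x \<in> X" using x ZX by blast
  have H: "0 \<le> \<eta> i x z \<and> (\<eta> i x z \<noteq> 0 \<longrightarrow> z \<in> X \<and> d x z \<le> T) \<and> infsum (\<eta> i x) X = 1"
    if h: "hasn i x"
  proof -
    define W where "W = Ws i x"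
    define q where "q = p i x"
    have WU: "W \<in> U i" "q \<in> W" "d x q < mr i * R" using Ws_p[OF h] unfolding W_def q_def by auto
    have gW: "goodA W Rb e S' (\<Xi> W)" using good i WU unfolding Rb_def by blast
    have qX: "q \<in> X" using WU sub i ZX by blast
    have eq: "\<eta> i x = \<Xi> W q" unfolding \<eta>_def W_def q_def using h by simp
    have P: "(\<forall>y. 0 \<le> \<Xi> W q y) \<and> (\<forall>y. \<Xi> W q y \<noteq> 0 \<longrightarrow> y \<in> X \<and> d q y \<le> S') \<and> infsum (\<Xi> W q) X = 1"
      using gW WU unfolding goodA_def by blast
    have "\<Xi> W q z \<noteq> 0 \<longrightarrow> z \<in> X \<and> d x z \<le> T"
    proof
      assume nz: "\<Xi> W q z \<noteq> 0"
      then have z: "z \<in> X" "d q z \<le> S'" using P by auto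
      have "d x z \<le> d x q + d q z" by (rule triangle[OF xX qX z(1)])
      also have "\<dots> \<le> mr k * R + S'"
        using WU(3) z mr_mono[of i] i Rpos by (smt (verit, best) atLeastAtMost_iff mult_right_mono)
      finally show "z \<in> X \<and> d x z \<le> T" unfolding T_def using z by simp
    qed
    then show ?thesis using P eq by simp
  qed
  show "0 \<le> \<eta> i x z" using H unfolding \<eta>_def by (cases "hasn i x") auto
  show "\<eta> i x z \<noteq> 0 \<Longrightarrow> z \<in> X \<and> d x z \<le> T" using H unfolding \<eta>_def by (cases "hasn i x") auto
  show "hasn i x \<Longrightarrow> infsum (\<eta> i x) X = 1" using H by blast
qed

lemma eta_sum:
  assumes i: "i \<in> {1..k}" and x: "x \<in> Z" and A: "finite A" "A \<subseteq> X"
    "\<And>z. z \<in> X \<Longrightarrow> d x z \<le> T \<Longrightarrow> z \<in> A"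
  shows "sum (\<eta> i x) A = (if hasn i x then 1 else 0)"
proof (cases "hasn i x")
  case True
  have "infsum (\<eta> i x) X = sum (\<eta> i x) A"
    by (rule inf_to_sum) (use A eta_props(2)[OF i x] in auto)
  then show ?thesis using eta_props(3)[OF i x True] True by simp
next
  case False
  then show ?thesis unfolding \<eta>_def by simp
qed

lemma zeta_props:
  assumes x: "x \<in> Z"
  shows "0 \<le> \<zeta> x z" "\<zeta> x z \<noteq> 0 \<Longrightarrow> z \<in> X \<and> d x z \<le> T"
proof -
  have W1: "Wt x \<ge> 1" using Wt_ge1 x .
  show "0 \<le> \<zeta> x z" unfolding \<zeta>_def
    using W1 w_bounds eta_props(1)[OF _ x] by (intro sum_nonneg) auto
  assume "\<zeta> x z \<noteq> 0"
  then obtain i where i: "i \<in> {1..k}" "w i x / Wt x * \<eta> i x z \<noteq> 0"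
    unfolding \<zeta>_def by (meson sum.not_neutral_contains_not_neutral)
  then show "z \<in> X \<and> d x z \<le> T" using eta_props(2)[OF i(1) x] by auto
qed

lemma a_sum: assumes x: "x \<in> Z" shows "(\<Sum>i\<in>{1..k}. w i x / Wt x) = 1"
proof -
  have "Wt x \<ge> 1" using Wt_ge1 x .
  then show ?thesis unfolding Wt_def by (simp add: sum_divide_distrib[symmetric])
qed

lemma zeta_sum:
  assumes x: "x \<in> Z" and A: "finite A" "A \<subseteq> X"
    "\<And>z. z \<in> X \<Longrightarrow> d x z \<le> T \<Longrightarrow> z \<in> A"
  shows "sum (\<zeta> x) A = 1"
proof -
  have "sum (\<zeta> x) A = (\<Sum>i\<in>{1..k}. (w i x / Wt x) * sum (\<eta> i x) A)"
    unfolding \<zeta>_def by (simp add: sum.swap[of _ A] sum_distrib_left)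
  also have "\<dots> = (\<Sum>i\<in>{1..k}. w i x / Wt x)"
    by (rule sum.cong) (use eta_sum[OF _ x A] w_zero in auto)
  also have "\<dots> = 1" using a_sum x .
  finally show ?thesis .
qed

lemma var_i:
  assumes i: "i \<in> {1..k}" and xy: "x \<in> Z" "y \<in> Z" "d x y \<le> R"
    and A: "finite A" "A \<subseteq> X" "\<And>z. z \<in> X \<Longrightarrow> d x z \<le> T + R \<Longrightarrow> z \<in> A"
    and ab: "0 \<le> a" "0 \<le> b" "\<not> hasn i x \<Longrightarrow> a = 0" "\<not> hasn i y \<Longrightarrow> b = 0"
  shows "(\<Sum>z\<in>A. \<bar>a * \<eta> i x z - b * \<eta> i y z\<bar>) \<le> \<bar>a - b\<bar> + b * e"
proof -
  have X: "x \<in> X" "y \<in> X" using xy ZX by auto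
  have Ax: "\<And>z. z \<in> X \<Longrightarrow> d x z \<le> T \<Longrightarrow> z \<in> A" using A(3) Rpos by force
  have Ay: "z \<in> A" if "z \<in> X" "d y z \<le> T" for z
  proof -
    have "d x z \<le> d x y + d y z" by (rule triangle[OF X(1) X(2) that(1)])
    then show ?thesis using A(3) that xy by force
  qed
  have sx: "sum (\<eta> i x) A = (if hasn i x then 1 else 0)" by (rule eta_sum[OF i xy(1) A(1,2) Ax])
  have sy: "sum (\<eta> i y) A = (if hasn i y then 1 else 0)" by (rule eta_sum[OF i xy(2) A(1,2) Ay])
  have nx: "\<And>z. 0 \<le> \<eta> i x z" and ny: "\<And>z. 0 \<le> \<eta> i y z" using eta_props(1) i xy by auto
  show ?thesis
  proof (cases "hasn i x"; cases "hasn i y")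
    assume hx: "hasn i x" and hy: "hasn i y"
    define W where "W = Ws i x"
    have WW: "Ws i y = W" unfolding W_def using unique[OF i X xy(3) Ws_p(1)[OF hx] Ws_p(1)[OF hy]] by simp
    have WU: "W \<in> U i" using Ws_p(2)[OF hx] W_def by simp
    have gW: "goodA W Rb e S' (\<Xi> W)" using good i WU unfolding Rb_def by blast
    have pq: "p i x \<in> W" "p i y \<in> W" using Ws_p(3)[OF hx] Ws_p(3)[OF hy] WW W_def by auto
    have pX: "p i x \<in> X" "p i y \<in> X" using pq WU sub i ZX by blast+
    have "d (p i x) (p i y) \<le> d (p i x) x + d x (p i y)" by (rule triangle[OF pX(1) X(1) pX(2)])
    also have "d x (p i y) \<le> d x y + d y (p i y)" by (rule triangle[OF X(1) X(2) pX(2)])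
    finally have "d (p i x) (p i y) < 2 * mr i * R + R"
      using Ws_p(4)[OF hx] Ws_p(4)[OF hy] xy(3) commute[of "p i x" x] by simp
    also have "\<dots> \<le> Rb"
    proof -
      have "Rb = (2*mr k + 1)*R" unfolding Rb_def mr_def by simp
      moreover have "(2*mr i + 1)*R \<le> (2*mr k + 1)*R" using mr_mono[of i] i Rpos by simp
      ultimately show ?thesis by (simp add: algebra_simps)
    qed
    finally have dpq: "d (p i x) (p i y) \<le> Rb" by simp
    have ex: "\<eta> i x = \<Xi> W (p i x)" and ey: "\<eta> i y = \<Xi> W (p i y)"
      unfolding \<eta>_def using hx hy WW W_def by auto
    have "infsum (\<lambda>z. \<bar>\<Xi> W (p i x) z - \<Xi> W (p i y) z\<bar>) X \<le> e"
      using gW pq dpq unfolding goodA_def by blast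
    moreover have "infsum (\<lambda>z. \<bar>\<Xi> W (p i x) z - \<Xi> W (p i y) z\<bar>) X
        = (\<Sum>z\<in>A. \<bar>\<Xi> W (p i x) z - \<Xi> W (p i y) z\<bar>)"
    proof (rule inf_to_sum[OF A(1,2)])
      fix z assume z: "z \<in> X" "\<bar>\<Xi> W (p i x) z - \<Xi> W (p i y) z\<bar> \<noteq> 0"
      then have "\<eta> i x z \<noteq> 0 \<or> \<eta> i y z \<noteq> 0" using ex ey by auto
      then show "z \<in> A" using eta_props(2)[OF i xy(1)] eta_props(2)[OF i xy(2)] Ax Ay by blast
    qed
    ultimately have dif: "(\<Sum>z\<in>A. \<bar>\<eta> i x z - \<eta> i y z\<bar>) \<le> e" using ex ey by simp
    have "(\<Sum>z\<in>A. \<bar>a * \<eta> i x z - b * \<eta> i y z\<bar>)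
        \<le> (\<Sum>z\<in>A. \<bar>a - b\<bar> * \<eta> i x z + b * \<bar>\<eta> i x z - \<eta> i y z\<bar>)"
    proof (rule sum_mono)
      fix z
      have "a * \<eta> i x z - b * \<eta> i y z = (a - b) * \<eta> i x z + b * (\<eta> i x z - \<eta> i y z)"
        by (simp add: algebra_simps)
      also have "\<bar>\<dots>\<bar> \<le> \<bar>(a - b) * \<eta> i x z\<bar> + \<bar>b * (\<eta> i x z - \<eta> i y z)\<bar>" by (rule abs_triangle_ineq)
      also have "\<dots> = \<bar>a - b\<bar> * \<eta> i x z + b * \<bar>\<eta> i x z - \<eta> i y z\<bar>"
        using nx[of z] ab by (simp add: abs_mult)
      finally show "\<bar>a * \<eta> i x z - b * \<eta> i y z\<bar> \<le> \<bar>a - b\<bar> * \<eta> i x z + b * \<bar>\<eta> i x z - \<eta> i y z\<bar>" .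
    qed
    also have "\<dots> = \<bar>a - b\<bar> * sum (\<eta> i x) A + b * (\<Sum>z\<in>A. \<bar>\<eta> i x z - \<eta> i y z\<bar>)"
      by (simp add: sum.distrib sum_distrib_left)
    also have "\<dots> \<le> \<bar>a - b\<bar> + b * e" using sx hx dif ab by (simp add: mult_left_mono)
    finally show ?thesis .
  next
    assume hx: "hasn i x" and hy: "\<not> hasn i y"
    have "\<eta> i y = (\<lambda>_. 0)" unfolding \<eta>_def using hy by simp
    then have "(\<Sum>z\<in>A. \<bar>a * \<eta> i x z - b * \<eta> i y z\<bar>) = a * sum (\<eta> i x) A"
      using nx ab by (simp add: abs_mult sum_distrib_left)
    then show ?thesis using sx hx ab hy by simp
  next
    assume hx: "\<not> hasn i x" and hy: "hasn i y"
    have "\<eta> i x = (\<lambda>_. 0)" unfolding \<eta>_def using hx by simp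
    then have "(\<Sum>z\<in>A. \<bar>a * \<eta> i x z - b * \<eta> i y z\<bar>) = b * sum (\<eta> i y) A"
      using ny ab by (simp add: abs_mult sum_distrib_left)
    then show ?thesis using sy hy ab hx e0 by simp
  next
    assume "\<not> hasn i x" "\<not> hasn i y"
    then show ?thesis using ab by simp
  qed
qed

lemma inv_mr_sum: "(\<Sum>i\<in>{1..k}. 1 / mr i) \<le> 1 / real M"
proof -
  have "(\<Sum>i\<in>{1..k}. 1 / mr i) = (\<Sum>i\<in>{1..k}. (1/2::real)^i) / real M"
    unfolding mr_def by (simp add: sum_divide_distrib power_one_over)
  also have "\<dots> = (1 - (1/2)^k) / real M" by (simp only: geo_sum)
  also have "\<dots> \<le> 1 / real M" using M1 by (simp add: divide_right_mono)
  finally show ?thesis .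
qed

lemma main: "\<exists>\<xi>. goodA Z R (2 / real M + e) (2^k * real M * R + S') \<xi>"
proof (intro exI)
  have TT: "T = 2^k * real M * R + S'" unfolding T_def mr_def by simp
  show "goodA Z R (2 / real M + e) (2^k * real M * R + S') \<zeta>"
    unfolding goodA_def TT[symmetric]
  proof (intro ballI conjI allI impI)
    fix x assume x: "x \<in> Z"
    have xX: "x \<in> X" using x ZX by blast
    show "\<And>y. 0 \<le> \<zeta> x y" using zeta_props(1)[OF x] .
    show "\<And>y. \<zeta> x y \<noteq> 0 \<Longrightarrow> y \<in> X" using zeta_props(2)[OF x] by blast
    show "\<And>y. \<zeta> x y \<noteq> 0 \<Longrightarrow> d x y \<le> T" using zeta_props(2)[OF x] by blast
    have "infsum (\<zeta> x) X = sum (\<zeta> x) (cb x T)"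
      by (rule inf_to_sum) (use finite_cb[OF xX] zeta_props(2)[OF x] in \<open>auto simp: cb_def\<close>)
    also have "\<dots> = 1"
      by (rule zeta_sum[OF x]) (use finite_cb[OF xX] in \<open>auto simp: cb_def\<close>)
    finally show "infsum (\<zeta> x) X = 1" .
    fix y assume y: "y \<in> Z" and dxy: "d x y \<le> R"
    have yX: "y \<in> X" using y ZX by blast
    define A where "A = cb x (T + R)"
    have A: "finite A" "A \<subseteq> X" "\<And>z. z \<in> X \<Longrightarrow> d x z \<le> T + R \<Longrightarrow> z \<in> A"
      unfolding A_def using finite_cb[OF xX] by (auto simp: cb_def)
    have "infsum (\<lambda>z. \<bar>\<zeta> x z - \<zeta> y z\<bar>) X = (\<Sum>z\<in>A. \<bar>\<zeta> x z - \<zeta> y z\<bar>)"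
    proof (rule inf_to_sum[OF A(1,2)])
      fix z assume z: "z \<in> X" "\<bar>\<zeta> x z - \<zeta> y z\<bar> \<noteq> 0"
      then have "\<zeta> x z \<noteq> 0 \<or> \<zeta> y z \<noteq> 0" by auto
      then show "z \<in> A"
      proof
        assume "\<zeta> x z \<noteq> 0"
        then have "d x z \<le> T" using zeta_props(2)[OF x] by blast
        then have "d x z \<le> T + R" using Rpos by simp
        then show "z \<in> A" using A(3) z(1) by blast
      next
        assume "\<zeta> y z \<noteq> 0"
        then have "d y z \<le> T" using zeta_props(2)[OF y] by blast
        moreover have "d x z \<le> d x y + d y z" by (rule triangle[OF xX yX z(1)])
        ultimately have "d x z \<le> T + R" using dxy by simp
        then show "z \<in> A" using A(3) z(1) by blast
      qed
    qed
    also have "\<dots> = (\<Sum>z\<in>A. \<bar>\<Sum>i\<in>{1..k}. (w i x / Wt x) * \<eta> i x z - (w i y / Wt y) * \<eta> i y z\<bar>)"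
      unfolding \<zeta>_def by (simp add: sum_subtractf)
    also have "\<dots> \<le> (\<Sum>z\<in>A. \<Sum>i\<in>{1..k}. \<bar>(w i x / Wt x) * \<eta> i x z - (w i y / Wt y) * \<eta> i y z\<bar>)"
      by (intro sum_mono sum_abs)
    also have "\<dots> = (\<Sum>i\<in>{1..k}. \<Sum>z\<in>A. \<bar>(w i x / Wt x) * \<eta> i x z - (w i y / Wt y) * \<eta> i y z\<bar>)"
      by (rule sum.swap)
    also have "\<dots> \<le> (\<Sum>i\<in>{1..k}. \<bar>w i x / Wt x - w i y / Wt y\<bar> + (w i y / Wt y) * e)"
    proof (rule sum_mono)
      fix i assume i: "i \<in> {1..k}"
      show "(\<Sum>z\<in>A. \<bar>(w i x / Wt x) * \<eta> i x z - (w i y / Wt y) * \<eta> i y z\<bar>)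
          \<le> \<bar>w i x / Wt x - w i y / Wt y\<bar> + (w i y / Wt y) * e"
      proof (rule var_i[OF i x y dxy A])
        have w1: "Wt x \<ge> 1" "Wt y \<ge> 1" using Wt_ge1[OF x] Wt_ge1[OF y] by auto
        show "0 \<le> w i x / Wt x" using w1 w_bounds(1)[of i x] by simp
        show "0 \<le> w i y / Wt y" using w1 w_bounds(1)[of i y] by simp
        show "\<not> hasn i x \<Longrightarrow> w i x / Wt x = 0" using w_zero[of i x] by simp
        show "\<not> hasn i y \<Longrightarrow> w i y / Wt y = 0" using w_zero[of i y] by simp
      qed
    qed
    also have "\<dots> = (\<Sum>i\<in>{1..k}. \<bar>w i x / Wt x - w i y / Wt y\<bar>) + (\<Sum>i\<in>{1..k}. w i y / Wt y) * e"
      by (simp only: sum.distrib sum_distrib_right)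
    also have "\<dots> = (\<Sum>i\<in>{1..k}. \<bar>w i x / Wt x - w i y / Wt y\<bar>) + e"
      using a_sum[OF y] by simp
    also have "(\<Sum>i\<in>{1..k}. \<bar>w i x / Wt x - w i y / Wt y\<bar>) \<le> 2 * (\<Sum>i\<in>{1..k}. \<bar>w i x - w i y\<bar>)"
      unfolding Wt_def
    proof (rule norm_wt)
      show "\<forall>i\<in>{1..k}. 0 \<le> w i y" using w_bounds(1) by blast
      show "1 \<le> sum (\<lambda>i. w i x) {1..k}" using Wt_ge1[OF x] unfolding Wt_def .
      show "1 \<le> sum (\<lambda>i. w i y) {1..k}" using Wt_ge1[OF y] unfolding Wt_def .
    qed simp
    also have "(\<Sum>i\<in>{1..k}. \<bar>w i x - w i y\<bar>) \<le> (\<Sum>i\<in>{1..k}. 1 / mr i)"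
      by (rule sum_mono) (rule w_var[OF _ x y dxy])
    also have "\<dots> \<le> 1 / real M" by (rule inv_mr_sum)
    finally show "infsum (\<lambda>z. \<bar>\<zeta> x z - \<zeta> y z\<bar>) X \<le> 2 / real M + e" by simp
  qed
qed

end

context bgm begin

lemma combine:
  fixes M :: nat and U :: "nat \<Rightarrow> 'a set set" and \<Xi> :: "'a set \<Rightarrow> 'a \<Rightarrow> 'a \<Rightarrow> real"
  assumes "R > 0" "M \<ge> 1" "Z \<subseteq> X" "e \<ge> 0"
    "Z \<subseteq> \<Union>(\<Union>i\<in>{1..k}. U i)"
    "\<forall>i\<in>{1..k}. \<forall>W\<in>U i. W \<subseteq> Z"
    "\<forall>i\<in>{1..k}. r_disjoint d ((2 * (2^i * real M) + 1) * R) (U i)"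
    "\<forall>i\<in>{1..k}. \<forall>W\<in>U i. goodA W ((2 * (2^k * real M) + 1) * R) e S' (\<Xi> W)"
  shows "\<exists>\<xi>. goodA Z R (2 / real M + e) (2^k * real M * R + S') \<xi>"
proof -
  interpret c: comb X d R M Z e k U \<Xi> S'
    by unfold_locales (use assms in auto)
  show ?thesis by (rule c.main)
qed

lemma step_case:
  assumes "\<forall>R. \<exists>Y. unifA Y \<and> decomposes d F R Y" shows "unifA F"
  unfolding unifA_def
proof (intro allI impI)
  fix R e :: real assume Re: "R > 0" "e > 0"
  define M where "M = nat \<lceil>4/e\<rceil> + 1"
  have M1: "M \<ge> 1" unfolding M_def by simp
  have "4/e \<le> real (nat \<lceil>4/e\<rceil>)" by (rule real_nat_ceiling_ge)
  then have "real M > 4/e" unfolding M_def by simp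
  then have "4 < real M * e" using Re by (simp add: field_simps)
  then have Me: "2 / real M \<le> e/2" using M1 by (simp add: field_simps)
  define Rs where "Rs = (\<lambda>i::nat. (2 * (2^i * real M) + 1) * R)"
  obtain Y where Y: "unifA Y" "decomposes d F Rs Y" using assms by blast
  obtain k where k: "\<forall>Z\<in>F. \<exists>U :: nat \<Rightarrow> 'a set set.
        (\<forall>i\<in>{1..k}. U i \<subseteq> Y \<and> (\<forall>V\<in>U i. V \<subseteq> Z) \<and> r_disjoint d (Rs i) (U i)) \<and>
        Z \<subseteq> \<Union>(\<Union>i\<in>{1..k}. U i)"
    using Y(2) unfolding decomposes_def by blast
  define R' where "R' = (2 * (2^k * real M) + 1) * R"
  have "R' > 0" unfolding R'_def using Re by (intro mult_pos_pos add_nonneg_pos) auto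
  then obtain S' where S': "\<forall>V\<in>Y. V \<subseteq> X \<longrightarrow> (\<exists>\<xi>. goodA V R' (e/2) S' \<xi>)"
  proof -
    have "e/2 > 0" using Re by simp
    then show ?thesis using Y(1) \<open>R' > 0\<close> that unfolding unifA_def by blast
  qed
  show "\<exists>S. \<forall>V\<in>F. V \<subseteq> X \<longrightarrow> (\<exists>\<xi>. goodA V R e S \<xi>)"
  proof (rule exI[of _ "2^k * real M * R + S'"], intro ballI impI)
    fix Z assume Z: "Z \<in> F" "Z \<subseteq> X"
    from bspec[OF k Z(1)] obtain U :: "nat \<Rightarrow> 'a set set" where U0:
      "(\<forall>i\<in>{1..k}. U i \<subseteq> Y \<and> (\<forall>V\<in>U i. V \<subseteq> Z) \<and> r_disjoint d (Rs i) (U i)) \<and>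
      Z \<subseteq> \<Union>(\<Union>i\<in>{1..k}. U i)" ..
    have U: "\<forall>i\<in>{1..k}. U i \<subseteq> Y \<and> (\<forall>V\<in>U i. V \<subseteq> Z) \<and> r_disjoint d (Rs i) (U i)"
      "Z \<subseteq> \<Union>(\<Union>i\<in>{1..k}. U i)" using U0 by (rule conjunct1, rule conjunct2)
    define \<Xi> where "\<Xi> = (\<lambda>W. SOME \<xi>. goodA W R' (e/2) S' \<xi>)"
    have G: "\<forall>i\<in>{1..k}. \<forall>W\<in>U i. goodA W R' (e/2) S' (\<Xi> W)"
    proof (intro ballI)
      fix i W assume i: "i \<in> {1..k}" and W: "W \<in> U i"
      then have "W \<in> Y" "W \<subseteq> Z" using U(1) i by blast+
      then have "W \<in> Y" "W \<subseteq> X" using Z(2) by auto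
      then have "\<exists>\<xi>. goodA W R' (e/2) S' \<xi>" using S' by blast
      then show "goodA W R' (e/2) S' (\<Xi> W)" unfolding \<Xi>_def by (rule someI_ex)
    qed
    have "\<exists>\<xi>. goodA Z R (2 / real M + e/2) (2^k * real M * R + S') \<xi>"
    proof (rule combine[where R=R and M=M and Z=Z and e="e/2" and k=k and U=U and \<Xi>=\<Xi> and S'=S'])
      show "\<forall>i\<in>{1..k}. \<forall>W\<in>U i. W \<subseteq> Z" using U(1) by blast
      show "\<forall>i\<in>{1..k}. r_disjoint d ((2 * (2^i * real M) + 1) * R) (U i)"
        using U(1) unfolding Rs_def by blast
      show "\<forall>i\<in>{1..k}. \<forall>W\<in>U i. goodA W ((2 * (2^k * real M) + 1) * R) (e/2) S' (\<Xi> W)"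
        using G unfolding R'_def by blast
    qed (use Re M1 Z(2) U(2) in simp_all)
    then obtain \<xi> where "goodA Z R (2 / real M + e/2) (2^k * real M * R + S') \<xi>" by blast
    then have "goodA Z R e (2^k * real M * R + S') \<xi>" by (rule goodA_mono) (use Me in simp)
    then show "\<exists>\<xi>. goodA Z R e (2^k * real M * R + S') \<xi>" by blast
  qed
qed

lemma apc_unifA: "finite_apc d F \<Longrightarrow> unifA F"
proof (induction rule: finite_apc.induct)
  case (base F) then show ?case by (rule base_case)
next
  case (step F) then show ?case by (intro step_case) blast
qed

end

theorem theorem5p8:
  fixes X :: "'a set" and d :: "'a \<Rightarrow> 'a \<Rightarrow> real"
  assumes "Metric_space X d"
    and "discrete_space X d"
    and "bounded_geometry X d"
    and "finite_APC_complexity X d"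
  shows "property_A X d"
proof -
  interpret bgm X d using assms(1,3) by (simp add: bgm_def bgm_axioms_def)
  obtain F where "X \<in> F" "finite_apc d F" using assms(4) unfolding finite_APC_complexity_def by blast
  then show ?thesis using apc_unifA[of F] final_case[of F] by simp
qed

end
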